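(* Let $\upsilon\in(0,1]$, $P_b>0$, $h>0$, $T>0$, $\sigma^2>0$, $B>0$, $L>0$. Consider Problem P4: maximize $S_{\mathrm{off}}(t)=\upsilon P_bhT+\left(\frac{\sigma^2}{h}-\upsilon P_bh\right)t-\frac{\sigma^2}{h}t\,2^{\frac{L}{Bt}}$ over $t$ subject to $0<t<T$ and $S_{\mathrm{off}}(t)\ge 0$. Let $W$ be the principal branch of the Lambert function ($W(x)e^{W(x)}=x$), let $$\rho(h)=\frac{\ln 2}{B\left[1+W\!\left(\frac{\upsilon P_bh^2}{\sigma^2e}-\frac1e\right)\right]},$$ and define $$a''=\frac{\sigma^2}{\upsilon}\left\{1+\left[\frac{L\ln2}{BT}+W\!\left(-e^{-1-\frac{L\ln2}{BT}}\right)\right]\exp\!\left(\frac{L\ln2}{BT}+W\!\left(-e^{-1-\frac{L\ln 2}{BT}}\right)+1\right)\right\}.$$ Then the optimal offloading duration $t^*$ solving P4 satisfies: (1) if $P_bh^2<a''$, Problem P4 is infeasible; (2) if $P_bh^2\ge a''$, $t^*=\rho(h)L$.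
   Context: In the offloading mode the interval $[0,T]$ is split into power transfer of length $T-t$ (harvesting $\upsilon P_bh(T-t)$) followed by fixed-rate transmission of $L$ bits over duration $t$ with bandwidth $B$, channel power gain $h$ and noise variance $\sigma^2$ (energy $(2^{L/(Bt)}-1)\frac{\sigma^2}{h}t$); $S_{\mathrm{off}}$ is the resulting energy savings. *)

theory Defs
  imports Complex_Main
begin

text \<open>Principal branch of the Lambert W function: for x \<ge> -1/e, the unique w \<ge> -1
  with w * exp w = x.\<close>
definition lambertW :: "real \<Rightarrow> real" where
  "lambertW x = (THE w. -1 \<le> w \<and> w * exp w = x)"

definition S_off :: "real \<Rightarrow> real \<Rightarrow> real \<Rightarrow> real \<Rightarrow> real \<Rightarrow> real \<Rightarrow> real \<Rightarrow> real \<Rightarrow> real" where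
  "S_off ups Pb h T sigma2 B L t =
     ups * Pb * h * T + (sigma2 / h - ups * Pb * h) * t - sigma2 / h * t * 2 powr (L / (B * t))"

definition rho :: "real \<Rightarrow> real \<Rightarrow> real \<Rightarrow> real \<Rightarrow> real \<Rightarrow> real" where
  "rho ups Pb sigma2 B h =
     ln 2 / (B * (1 + lambertW (ups * Pb * h^2 / (sigma2 * exp 1) - 1 / exp 1)))"

definition a2 :: "real \<Rightarrow> real \<Rightarrow> real \<Rightarrow> real \<Rightarrow> real \<Rightarrow> real" where
  "a2 ups sigma2 B T L =
     (let c = L * ln 2 / (B * T); w = lambertW (- exp (-1 - c))
      in sigma2 / ups * (1 + (c + w) * exp (c + w + 1)))"

definition P4_feasible :: "real \<Rightarrow> real \<Rightarrow> real \<Rightarrow> real \<Rightarrow> real \<Rightarrow> real \<Rightarrow> real \<Rightarrow> real \<Rightarrow> bool" where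
  "P4_feasible ups Pb h T sigma2 B L t \<longleftrightarrow>
     0 < t \<and> t < T \<and> S_off ups Pb h T sigma2 B L t \<ge> 0"

end

theory Submission
  imports Defs
begin

lemma exp_strict: fixes x :: real assumes "x \<noteq> 0" shows "1 + x < exp x"
proof (cases "1 + x/2 > 0")
  case True
  have "1 + x/2 \<le> exp (x/2)" by (rule exp_ge_add_one_self)
  hence "(1 + x/2)^2 \<le> exp (x/2) ^2" using True by (intro power_mono) auto
  also have "exp (x/2)^2 = exp x" by (simp add: power2_eq_square flip: exp_add)
  finally have "(1+x/2)^2 \<le> exp x" .
  moreover have "0 < x*x" using assms by (cases "x > 0") (auto simp: mult_neg_neg)
  hence "1 + x < (1+x/2)^2" by (simp add: power2_eq_square algebra_simps)
  ultimately show ?thesis by linarith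
next
  case False
  then have "1 + x < 0" by linarith
  then show ?thesis using exp_gt_zero[of x] by linarith
qed

lemma xexp_mono:
  fixes a b :: real assumes "-1 \<le> a" "a < b" shows "a * exp a < b * exp b"
proof (cases "a \<ge> 0")
  case True
  have "a * exp a \<le> a * exp b" using True assms by (intro mult_left_mono) auto
  also have "\<dots> < b * exp b" using assms by simp
  finally show ?thesis .
next
  case False
  show ?thesis
  proof (cases "b \<ge> 0")
    case True
    have "a * exp a < 0" using False by (simp add: mult_neg_pos)
    moreover have "0 \<le> b * exp b" using True by simp
    ultimately show ?thesis by linarith
  next
    case F2: False
    define d where "d = b - a"
    have d: "d > 0" using assms d_def by simp
    have "1 - d < exp (-d)" using exp_strict[of "-d"] d by simp
    moreover have "1 - d/(-a) \<le> 1 - d"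
    proof -
      have "d / 1 \<le> d/(-a)" using d False assms by (intro divide_left_mono) auto
      hence "d \<le> d/(-a)" by simp
      thus ?thesis by simp
    qed
    ultimately have "1 - d/(-a) < exp (-d)" by linarith
    hence "(-a) * (1 - d/(-a)) < (-a) * exp (-d)" using False by (intro mult_strict_left_mono) auto
    hence "-a - d < (-a) * exp (-d)" using False by (simp add: algebra_simps)
    hence "-b < (-a) * exp (a - b)" using d_def by simp
    hence "-b * exp b < (-a) * exp (a - b) * exp b" by simp
    also have "\<dots> = -a * exp a" by (simp add: mult.assoc flip: exp_add)
    finally show ?thesis by simp
  qed
qed

lemma xexp_inj: fixes a b :: real assumes "-1 \<le> a" "-1 \<le> b" "a * exp a = b * exp b" shows "a = b"
  using xexp_mono[of a b] xexp_mono[of b a] assms by (cases a b rule: linorder_cases) auto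

lemma lambertW_ex: fixes x :: real assumes "- exp (-1) \<le> x"
  shows "\<exists>w. -1 \<le> w \<and> w * exp w = x"
proof -
  define M where "M = max 0 x"
  have c: "continuous_on {-1..M} (\<lambda>w. w * exp w)" by (intro continuous_intros)
  have "(-1) * exp (-1) \<le> x" using assms by simp
  moreover have "x \<le> M * exp M"
  proof (cases "x \<ge> 0")
    case True
    then have "M = x" by (simp add: M_def)
    moreover have "x * 1 \<le> x * exp x" using True by (intro mult_left_mono) auto
    ultimately show ?thesis by simp
  next
    case False then show ?thesis by (simp add: M_def)
  qed
  moreover have "-1 \<le> M" by (simp add: M_def)
  ultimately obtain w where "-1 \<le> w" "w \<le> M" "w * exp w = x"
    using IVT'[of "\<lambda>w. w * exp w" "-1" x M] c by auto
  thus ?thesis by auto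
qed

lemma lambertW: fixes x :: real assumes "- exp (-1) \<le> x"
  shows "-1 \<le> lambertW x \<and> lambertW x * exp (lambertW x) = x"
proof -
  have "\<exists>!w. -1 \<le> w \<and> w * exp w = x"
    using lambertW_ex[OF assms] xexp_inj by blast
  thus ?thesis unfolding lambertW_def by (rule theI')
qed

definition F :: "real \<Rightarrow> real \<Rightarrow> real \<Rightarrow> real \<Rightarrow> real" where
  "F A T c t = A * T + (1 - A) * t - t * exp (c / t)"

lemma key_id:
  fixes A T c u t :: real
  assumes "c > 0" "u > 0" "t > 0" "A = 1 + (u - 1) * exp u"
  shows "F A T c (c/u) = F A T c t + t * (exp (c/t) - exp u * (1 + c/t - u))"
proof -
  have cu: "c / (c/u) = u" using assms by simp
  show ?thesis unfolding F_def assms(4) cu using assms by (simp add: field_simps)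
qed

lemma key_le:
  fixes A T c u t :: real
  assumes "c > 0" "u > 0" "t > 0" "A = 1 + (u - 1) * exp u"
  shows "F A T c t \<le> F A T c (c/u)" and "t \<noteq> c/u \<Longrightarrow> F A T c t < F A T c (c/u)"
proof -
  have e: "exp (c/t) = exp u * exp (c/t - u)" by (simp flip: exp_add)
  have "exp u * (1 + (c/t - u)) \<le> exp u * exp (c/t - u)"
    by (intro mult_left_mono) auto
  hence "0 \<le> exp (c/t) - exp u * (1 + c/t - u)" using e by (simp add: algebra_simps)
  hence "0 \<le> t * (exp (c/t) - exp u * (1 + c/t - u))" using assms by simp
  moreover note key_id[OF assms, where T=T]
  ultimately show "F A T c t \<le> F A T c (c/u)" by linarith
  assume "t \<noteq> c/u"
  hence "c/t - u \<noteq> 0" using assms by (auto simp: field_simps)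
  hence "exp u * (1 + (c/t - u)) < exp u * exp (c/t - u)"
    using exp_strict by (intro mult_strict_left_mono) auto
  hence "0 < exp (c/t) - exp u * (1 + c/t - u)" using e by (simp add: algebra_simps)
  hence "0 < t * (exp (c/t) - exp u * (1 + c/t - u))" using assms by simp
  moreover note key_id[OF assms, where T=T]
  ultimately show "F A T c t < F A T c (c/u)" by linarith
qed

lemma F_at: assumes "c > 0" "u > 0" "A = 1 + (u - 1) * exp u"
  shows "F A T c (c/u) = A * T - c * exp u"
proof -
  have cu: "c / (c/u) = u" using assms by simp
  show ?thesis unfolding F_def assms(3) cu using assms by (simp add: field_simps)
qed

lemma S_F:
  assumes "0 < h" "0 < sigma2"
  shows "S_off ups Pb h T sigma2 B L t = sigma2 / h * F (ups * Pb * h^2 / sigma2) T (L * ln 2 / B) t"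
  using assms unfolding S_off_def F_def powr_def
  by (simp add: field_simps power2_eq_square)

theorem theorem2:
  fixes ups Pb h T sigma2 B L :: real
  assumes "0 < ups" "ups \<le> 1" "0 < Pb" "0 < h" "0 < T" "0 < sigma2" "0 < B" "0 < L"
  shows "(Pb * h^2 < a2 ups sigma2 B T L \<longrightarrow>
            \<not> (\<exists>t. P4_feasible ups Pb h T sigma2 B L t))
       \<and> (Pb * h^2 \<ge> a2 ups sigma2 B T L \<longrightarrow>
            (let tstar = rho ups Pb sigma2 B h * L in
               P4_feasible ups Pb h T sigma2 B L tstar \<and>
               (\<forall>t. P4_feasible ups Pb h T sigma2 B L t \<and> t \<noteq> tstar \<longrightarrow>
                    S_off ups Pb h T sigma2 B L t < S_off ups Pb h T sigma2 B L tstar)))"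
proof -
  define c where "c = L * ln 2 / B"
  define cp where "cp = L * ln 2 / (B * T)"
  define A where "A = ups * Pb * h^2 / sigma2"
  define w where "w = lambertW (- exp (-1 - cp))"
  define u0 where "u0 = cp + w + 1"
  define A0 where "A0 = 1 + (u0 - 1) * exp u0"
  have c0: "c > 0" using assms by (simp add: c_def)
  have cp0: "cp > 0" using assms by (simp add: cp_def)
  have ccp: "c = cp * T" using assms by (simp add: c_def cp_def)
  have A0p: "A > 0" using assms by (simp add: A_def)
  have "- exp (-1) \<le> - exp (-1 - cp)" using cp0 by simp
  from lambertW[OF this] have w1: "-1 \<le> w" and we: "w * exp w = - exp (-1 - cp)"
    unfolding w_def by auto
  have wn: "w \<noteq> -1"
  proof
    assume "w = -1"
    with we have "exp (-1) = exp (-1 - cp)" by simp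
    with cp0 show False by simp
  qed
  have u0cp: "u0 > cp" using w1 wn by (simp add: u0_def)
  have u0p: "u0 > 0" using u0cp cp0 by simp
  have a2eq: "a2 ups sigma2 B T L = sigma2 / ups * A0"
    unfolding a2_def Let_def A0_def u0_def w_def cp_def by (simp add: algebra_simps)
  have "exp u0 = exp w * exp (cp + 1)" by (simp add: u0_def flip: exp_add)
  hence "w * exp u0 = (w * exp w) * exp (cp + 1)" by (simp add: mult.assoc)
  hence "w * exp u0 = - exp (-1 - cp) * exp (cp + 1)" using we by simp
  also have "\<dots> = -1" by (simp flip: exp_add)
  finally have wu: "w * exp u0 = -1" .
  have FA0: "F A0 T c (c/u0) = 0"
  proof -
    have "F A0 T c (c/u0) = A0 * T - c * exp u0" using F_at[OF c0 u0p A0_def] .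
    also have "\<dots> = T * (1 + w * exp u0)" unfolding A0_def ccp u0_def by (simp add: algebra_simps)
    also have "\<dots> = 0" using wu by simp
    finally show ?thesis .
  qed
  have Feq: "F A T c t = F A0 T c t + (A - A0) * (T - t)" for t
    unfolding F_def by (simp add: algebra_simps)
  have SF: "S_off ups Pb h T sigma2 B L t = sigma2 / h * F A T c t" for t
    using S_F[OF assms(4,6)] unfolding A_def c_def by simp
  have sh: "sigma2 / h > 0" using assms by simp
  have iff: "Pb * h^2 < a2 ups sigma2 B T L \<longleftrightarrow> A < A0"
  proof -
    have "Pb * h^2 < sigma2 / ups * A0 \<longleftrightarrow> ups * Pb * h^2 / sigma2 < A0"
      using assms by (simp add: field_simps)
    thus ?thesis using a2eq A_def by simp
  qed
  show ?thesis
  proof (intro conjI impI)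
    assume "Pb * h^2 < a2 ups sigma2 B T L"
    hence lt: "A < A0" using iff by simp
    show "\<not> (\<exists>t. P4_feasible ups Pb h T sigma2 B L t)"
    proof
      assume "\<exists>t. P4_feasible ups Pb h T sigma2 B L t"
      then obtain t where t0: "0 < t" and tT: "t < T" and S: "S_off ups Pb h T sigma2 B L t \<ge> 0"
        unfolding P4_feasible_def by auto
      have "0 \<le> sigma2 / h * F A T c t" using S SF[of t] by simp
      hence "0 \<le> F A T c t" using sh by (metis linorder_not_le mult_pos_neg not_less)
      moreover have "(A - A0) * (T - t) < 0" using lt tT by (simp add: mult_neg_pos)
      moreover have "F A0 T c t \<le> 0" using key_le(1)[OF c0 u0p t0 A0_def, where T=T] FA0 by simp
      ultimately show False using Feq[of t] by linarith
    qed
  next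
    assume "Pb * h^2 \<ge> a2 ups sigma2 B T L"
    hence ge: "A \<ge> A0" using iff by simp
    define W1 where "W1 = lambertW ((A - 1) / exp 1)"
    define u where "u = 1 + W1"
    have "- exp (-1) \<le> (A - 1) / exp 1" using A0p by (simp add: exp_minus field_simps)
    from lambertW[OF this] have W11: "-1 \<le> W1" and W1e: "W1 * exp W1 = (A - 1) / exp 1"
      unfolding W1_def by auto
    have "exp u = exp W1 * exp 1" by (simp add: u_def flip: exp_add)
    hence Au: "A = 1 + (u - 1) * exp u" using W1e by (simp add: u_def field_simps)
    have "W1 \<noteq> -1"
    proof
      assume "W1 = -1"
      with W1e have "(A - 1) / exp 1 = - exp (-1)" by simp
      hence "A = 0" by (simp add: exp_minus field_simps)
      with A0p show False by simp
    qed
    hence up: "u > 0" using W11 by (simp add: u_def)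
    have uu0: "u \<ge> u0"
    proof (rule ccontr)
      assume "\<not> u \<ge> u0"
      hence "(u-1) * exp (u-1) < (u0-1) * exp (u0-1)"
        using W11 by (intro xexp_mono) (auto simp: u_def)
      hence "(u-1) * exp (u-1) * exp 1 < (u0-1) * exp (u0-1) * exp 1" by simp
      hence "(u-1) * exp u < (u0-1) * exp u0" by (simp add: mult.assoc flip: exp_add)
      thus False using Au A0_def ge by simp
    qed
    have rhoeq: "rho ups Pb sigma2 B h * L = c / u"
    proof -
      have "ups * Pb * h^2 / (sigma2 * exp 1) - 1 / exp 1 = (A - 1) / exp 1"
        unfolding A_def using assms by (simp add: field_simps)
      thus ?thesis unfolding rho_def c_def W1_def[symmetric] u_def
        by (simp add: W1_def)
    qed
    have ts0: "c / u > 0" using c0 up by simp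
    have tsT: "c / u < T"
    proof -
      have "c < u * T" using ccp uu0 u0cp assms(5) by (simp add: mult_strict_right_mono)
      thus ?thesis using up by (simp add: divide_less_eq mult.commute)
    qed
    have t0T: "c / u0 \<le> T"
    proof -
      have "c \<le> u0 * T" using ccp u0cp assms(5) by (simp add: mult_right_mono)
      thus ?thesis using u0p by (simp add: divide_le_eq mult.commute)
    qed
    have "0 \<le> F A T c (c / u0)"
      using Feq[of "c/u0"] FA0 ge t0T by simp
    also have "\<dots> \<le> F A T c (c / u)"
      using key_le(1)[OF c0 up _ Au, of "c/u0" T] c0 u0p by simp
    finally have Fnn: "0 \<le> F A T c (c / u)" .
    show "let tstar = rho ups Pb sigma2 B h * L in
               P4_feasible ups Pb h T sigma2 B L tstar \<and>
               (\<forall>t. P4_feasible ups Pb h T sigma2 B L t \<and> t \<noteq> tstar \<longrightarrow>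
                    S_off ups Pb h T sigma2 B L t < S_off ups Pb h T sigma2 B L tstar)"
      unfolding Let_def rhoeq
    proof (intro conjI allI impI)
      show "P4_feasible ups Pb h T sigma2 B L (c / u)"
        unfolding P4_feasible_def using ts0 tsT SF[of "c/u"] mult_nonneg_nonneg[OF less_imp_le[OF sh] Fnn] by simp
    next
      fix t assume "P4_feasible ups Pb h T sigma2 B L t \<and> t \<noteq> c / u"
      hence t0: "t > 0" and tn: "t \<noteq> c/u" unfolding P4_feasible_def by auto
      have "F A T c t < F A T c (c/u)" using key_le(2)[OF c0 up t0 Au tn] .
      hence "sigma2 / h * F A T c t < sigma2 / h * F A T c (c/u)"
        using sh by (rule mult_strict_left_mono)
      thus "S_off ups Pb h T sigma2 B L t < S_off ups Pb h T sigma2 B L (c / u)"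
        by (simp only: SF)
    qed
  qed
qed

end
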